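(* Let $M_n$ be the $n$-th Motzkin number. Then, as Laurent series in $z$, $$\sum_{n\ge0}M_nz^n=13z^{-1}+14z^{-2}+\left(9z+12+24z^{-1}+21z^{-2}\right)\Psi(z^3)+\left(9z^5+12z^4+10z^3+23z^2+25z+19+14z^{-1}+4z^{-2}\right)\Psi^3(z^3)$$ $$-\left(9z^7+3z^6+24z^5+30z^4+6z^3+21z^2+6z+3+24z^{-1}+12z^{-2}\right)\Psi^5(z^3)\quad\text{modulo }27.$$
   Context: $M_n$ is the number of lattice paths from $(0,0)$ to $(n,0)$ with steps $(1,0),(1,1),(1,-1)$ never going below the $x$-axis; equivalently $\sum_n M_nz^n=\frac{1-z-\sqrt{1-2z-3z^2}}{2z^2}$. $\Psi(z)=\prod_{j\ge0}(1+z^{3^j})$. "Modulo $27$" means coefficientwise congruence of Laurent series. *)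

theory Defs
  imports "HOL-Computational_Algebra.Formal_Laurent_Series" "HOL-Number_Theory.Cong"
begin

text \<open>Motzkin paths of length n: step sequences over {-1,0,1} (steps (1,-1),(1,0),(1,1))
  that never go below the x-axis and end on it.\<close>
definition motzkin_paths :: "nat \<Rightarrow> int list set" where
  "motzkin_paths n = {xs. length xs = n \<and> set xs \<subseteq> {-1, 0, 1}
      \<and> (\<forall>k\<le>n. sum_list (take k xs) \<ge> 0) \<and> sum_list xs = 0}"

definition motzkin :: "nat \<Rightarrow> nat" where
  "motzkin n = card (motzkin_paths n)"

text \<open>Psi(z) = prod_{j>=0} (1 + z^(3^j)) as a formal power series: the coefficient of z^m
  of the infinite product equals that of the partial product over j < m+1 (later factors
  are 1 + O(z^(m+1))).\<close>
definition Psi :: "int fps" where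
  "Psi = Abs_fps (\<lambda>m. fps_nth (\<Prod>j<m+1. (1 + fps_X ^ (3 ^ j))) m)"

end

theory Submission
  imports Defs
begin


lemma B_big: fixes z U :: "'a::idom"
  shows "(182 + 365*z + 183*z^2)*(1+z^3)^5 + (21 + 24*z + 12*z^2 + 9*z^3)^2*(1+z^3)^4*(1+3*U)
   + 2*(21 + 24*z + 12*z^2 + 9*z^3)*(4 + 14*z + 19*z^2 + 25*z^3 + 23*z^4 + 10*z^5 + 12*z^6 + 9*z^7)*(1+z^3)^3*(1+3*U)^2
   + ((4 + 14*z + 19*z^2 + 25*z^3 + 23*z^4 + 10*z^5 + 12*z^6 + 9*z^7)^2 + 2*(21 + 24*z + 12*z^2 + 9*z^3)*(- 12 - 24*z - 3*z^2 - 6*z^3 - 21*z^4 - 6*z^5 - 30*z^6 - 24*z^7 - 3*z^8 - 9*z^9))*(1+z^3)^2*(1+3*U)^3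
   + 2*(4 + 14*z + 19*z^2 + 25*z^3 + 23*z^4 + 10*z^5 + 12*z^6 + 9*z^7)*(- 12 - 24*z - 3*z^2 - 6*z^3 - 21*z^4 - 6*z^5 - 30*z^6 - 24*z^7 - 3*z^8 - 9*z^9)*(1+z^3)*(1+3*U)^4
   + (- 12 - 24*z - 3*z^2 - 6*z^3 - 21*z^4 - 6*z^5 - 30*z^6 - 24*z^7 - 3*z^8 - 9*z^9)^2*(1+3*U)^5
   = 27*((13 + 27*z + 41*z^2 + 134*z^3 + 235*z^4 + 299*z^5 + 496*z^6 + 662*z^7 + 624*z^8 + 640*z^9 + 671*z^10 + 518*z^11 + 398*z^12 + 349*z^13 + 221*z^14 + 124*z^15 + 86*z^16 + 45*z^17 + 18*z^18 + 8*z^19 + 3*z^20) + (- 39 - 120*z - 90*z^2 - 150*z^3 - 222*z^4 + 456*z^5 + 1146*z^6 + 1374*z^7 + 1680*z^8 + 1494*z^9 + 1221*z^10 + 1116*z^11 + 876*z^12 + 714*z^13 + 492*z^14 + 318*z^15 + 195*z^16 + 132*z^17 + 84*z^18 + 36*z^19 + 27*z^20)*U^1 + (- 144 - 348*z - 840*z^2 - 2994*z^3 - 4425*z^4 - 2892*z^5 - 2697*z^6 - 2772*z^7 - 2601*z^8 - 4734*z^9 - 4983*z^10 - 4278*z^11 - 3363*z^12 - 2112*z^13 - 1722*z^14 - 870*z^15 - 738*z^16 - 342*z^17 + 36*z^18 - 54*z^19 + 81*z^20)*U^2 + (568 + 2176*z + 654*z^2 - 5512*z^3 - 6283*z^4 -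 4380*z^5 - 6209*z^6 - 2882*z^7 - 6321*z^8 - 13598*z^9 - 10451*z^10 - 11334*z^11 - 7807*z^12 - 3016*z^13 - 4488*z^14 - 1736*z^15 - 2000*z^16 - 1650*z^17 - 108*z^18 - 432*z^19 + 81*z^20)*U^3 + (1872 + 7056*z + 6264*z^2 - 900*z^3 + 3825*z^4 + 7290*z^5 + 5382*z^6 + 17640*z^7 + 10503*z^8 - 882*z^9 + 9162*z^10 + 2538*z^11 + 5256*z^12 + 12006*z^13 + 2754*z^14 + 3762*z^15 + 1359*z^16 - 1242*z^17 + 405*z^18 - 486*z^19)*U^4 + (1296 + 5184*z + 5832*z^2 + 2592*z^3 + 7209*z^4 + 10692*z^5 + 10530*z^6 + 20736*z^7 + 17253*z^8 + 10044*z^9 + 18306*z^10 + 13122*z^11 + 12798*z^12 + 16686*z^13 + 7776*z^14 + 6156*z^15 + 3969*z^16 + 486*z^17 + 729*z^18)*U^5)"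
  by algebra

lemma B1: fixes z p b :: "'a::idom"
  shows "((13*z+14) + p*b)^2 + (z-1)*((13*z+14) + p*b) + z^2 = (182 + 365*z + 183*z^2) + p^2*b^2 + 27*((z+1)*p*b)"
  by algebra

lemma B2: fixes w G b0 b1 b2 e0 :: "'a::idom"
  shows "w^5*(e0 + G*(b0+b1*G+b2*G^2)^2) = e0*w^5 + b0^2*w^4*(w*G) + 2*b0*b1*w^3*(w*G)^2 + (b1^2+2*b0*b2)*w^2*(w*G)^3 + 2*b1*b2*w*(w*G)^4 + b2^2*(w*G)^5"
  by algebra

definition rb :: "'a::idom \<Rightarrow> 'a \<Rightarrow> 'a" where
  "rb z p = (21 + 24*z + 12*z^2 + 9*z^3) + (4 + 14*z + 19*z^2 + 25*z^3 + 23*z^4 + 10*z^5 + 12*z^6 + 9*z^7)*p^2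
     + (- 12 - 24*z - 3*z^2 - 6*z^3 - 21*z^4 - 6*z^5 - 30*z^6 - 24*z^7 - 3*z^8 - 9*z^9)*p^4"

definition rr :: "'a::idom \<Rightarrow> 'a \<Rightarrow> 'a" where
  "rr z p = (13*z+14) + p * rb z p"

lemma B_core:
  fixes z p U :: "'a::idom"
  assumes h: "(1+z^3)*p^2 = 1+3*U"
  shows "(1+z^3)^5*((rr z p)^2 + (z-1)*(rr z p) + z^2) = 27*((1+z^3)^5*((z+1)*p*rb z p) + ((13 + 27*z + 41*z^2 + 134*z^3 + 235*z^4 + 299*z^5 + 496*z^6 + 662*z^7 + 624*z^8 + 640*z^9 + 671*z^10 + 518*z^11 + 398*z^12 + 349*z^13 + 221*z^14 + 124*z^15 + 86*z^16 + 45*z^17 + 18*z^18 + 8*z^19 + 3*z^20) + (- 39 - 120*z - 90*z^2 - 150*z^3 - 222*z^4 + 456*z^5 + 1146*z^6 + 1374*z^7 + 1680*z^8 + 1494*z^9 + 1221*z^10 + 1116*z^11 + 876*z^12 + 714*z^13 + 492*z^14 + 318*z^15 + 195*z^16 + 132*z^17 + 84*z^18 + 36*z^19 + 27*z^20)*U^1 + (- 144 - 348*z - 840*z^2 - 2994*z^3 - 4425*z^4 - 2892*z^5 - 2697*z^6 - 2772*z^7 - 2601*z^8 - 4734*z^9 - 4983*z^10 - 4278*z^11 - 3363*z^12 - 2112*z^13 - 1722*z^14 - 870*z^15 - 738*z^16 - 342*z^17 + 36*z^18 - 54*z^19 + 81*z^20)*U^2 + (568 + 2176*z + 654*z^2 -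 5512*z^3 - 6283*z^4 - 4380*z^5 - 6209*z^6 - 2882*z^7 - 6321*z^8 - 13598*z^9 - 10451*z^10 - 11334*z^11 - 7807*z^12 - 3016*z^13 - 4488*z^14 - 1736*z^15 - 2000*z^16 - 1650*z^17 - 108*z^18 - 432*z^19 + 81*z^20)*U^3 + (1872 + 7056*z + 6264*z^2 - 900*z^3 + 3825*z^4 + 7290*z^5 + 5382*z^6 + 17640*z^7 + 10503*z^8 - 882*z^9 + 9162*z^10 + 2538*z^11 + 5256*z^12 + 12006*z^13 + 2754*z^14 + 3762*z^15 + 1359*z^16 - 1242*z^17 + 405*z^18 - 486*z^19)*U^4 + (1296 + 5184*z + 5832*z^2 + 2592*z^3 + 7209*z^4 + 10692*z^5 + 10530*z^6 + 20736*z^7 + 17253*z^8 + 10044*z^9 + 18306*z^10 + 13122*z^11 + 12798*z^12 + 16686*z^13 + 7776*z^14 + 6156*z^15 + 3969*z^16 + 486*z^17 + 729*z^18)*U^5))"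
proof -
  let ?b0 = "21 + 24*z + 12*z^2 + 9*z^3"
  let ?b1 = "4 + 14*z + 19*z^2 + 25*z^3 + 23*z^4 + 10*z^5 + 12*z^6 + 9*z^7"
  let ?b2 = "- 12 - 24*z - 3*z^2 - 6*z^3 - 21*z^4 - 6*z^5 - 30*z^6 - 24*z^7 - 3*z^8 - 9*z^9"
  let ?e0 = "182 + 365*z + 183*z^2"
  let ?w = "1+z^3"
  have rbG: "rb z p = ?b0 + ?b1*p^2 + ?b2*(p^2)^2" by (simp add: rb_def power_mult[symmetric])
  have mini: "\<And>X E Y w::'a. X = E + 27*Y \<Longrightarrow> w*X = w*E + 27*(w*Y)" by (simp add: algebra_simps)
  have "(rr z p)^2 + (z-1)*(rr z p) + z^2 = ?e0 + p^2*(rb z p)^2 + 27*((z+1)*p*rb z p)"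
    unfolding rr_def by (rule B1)
  then have "?w^5*((rr z p)^2 + (z-1)*(rr z p) + z^2) = ?w^5*(?e0 + p^2*(rb z p)^2) + 27*(?w^5*((z+1)*p*rb z p))"
    by (rule mini)
  also have "?w^5*(?e0 + p^2*(rb z p)^2) = ?w^5*(?e0 + p^2*(?b0 + ?b1*p^2 + ?b2*(p^2)^2)^2)"
    by (simp only: rbG)
  also have "?w^5*(?e0 + p^2*(?b0 + ?b1*p^2 + ?b2*(p^2)^2)^2) = ?e0*?w^5 + ?b0^2*?w^4*(?w*p^2) + 2*?b0*?b1*?w^3*(?w*p^2)^2 + (?b1^2+2*?b0*?b2)*?w^2*(?w*p^2)^3 + 2*?b1*?b2*?w*(?w*p^2)^4 + ?b2^2*(?w*p^2)^5"
    by (rule B2)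
  also have "\<dots> = 27*((13 + 27*z + 41*z^2 + 134*z^3 + 235*z^4 + 299*z^5 + 496*z^6 + 662*z^7 + 624*z^8 + 640*z^9 + 671*z^10 + 518*z^11 + 398*z^12 + 349*z^13 + 221*z^14 + 124*z^15 + 86*z^16 + 45*z^17 + 18*z^18 + 8*z^19 + 3*z^20) + (- 39 - 120*z - 90*z^2 - 150*z^3 - 222*z^4 + 456*z^5 + 1146*z^6 + 1374*z^7 + 1680*z^8 + 1494*z^9 + 1221*z^10 + 1116*z^11 + 876*z^12 + 714*z^13 + 492*z^14 + 318*z^15 + 195*z^16 + 132*z^17 + 84*z^18 + 36*z^19 + 27*z^20)*U^1 + (- 144 - 348*z - 840*z^2 - 2994*z^3 - 4425*z^4 - 2892*z^5 - 2697*z^6 - 2772*z^7 - 2601*z^8 - 4734*z^9 - 4983*z^10 - 4278*z^11 - 3363*z^12 - 2112*z^13 - 1722*z^14 - 870*z^15 - 738*z^16 - 342*z^17 + 36*z^18 - 54*z^19 + 81*z^20)*U^2 + (568 + 2176*z + 654*z^2 - 5512*z^3 - 6283*z^4 - 4380*z^5 - 6209*z^6 - 2882*z^7 - 6321*z^8 - 13598*z^9 - 10451*z^10 - 11334*z^11 - 7807*z^12 - 3016*z^13 - 4488*z^14 - 1736*z^15 - 2000*z^16 - 1650*z^17 - 108*z^18 - 432*z^19 + 81*z^20)*U^3 + (1872 + 7056*z + 6264*z^2 - 900*z^3 + 3825*z^4 + 7290*z^5 + 5382*z^6 + 17640*z^7 + 10503*z^8 - 882*z^9 + 9162*z^10 +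 2538*z^11 + 5256*z^12 + 12006*z^13 + 2754*z^14 + 3762*z^15 + 1359*z^16 - 1242*z^17 + 405*z^18 - 486*z^19)*U^4 + (1296 + 5184*z + 5832*z^2 + 2592*z^3 + 7209*z^4 + 10692*z^5 + 10530*z^6 + 20736*z^7 + 17253*z^8 + 10044*z^9 + 18306*z^10 + 13122*z^11 + 12798*z^12 + 16686*z^13 + 7776*z^14 + 6156*z^15 + 3969*z^16 + 486*z^17 + 729*z^18)*U^5)"
    unfolding h by (rule B_big)
  finally have fin: "?w^5*((rr z p)^2 + (z-1)*(rr z p) + z^2) = 27*((13 + 27*z + 41*z^2 + 134*z^3 + 235*z^4 + 299*z^5 + 496*z^6 + 662*z^7 + 624*z^8 + 640*z^9 + 671*z^10 + 518*z^11 + 398*z^12 + 349*z^13 + 221*z^14 + 124*z^15 + 86*z^16 + 45*z^17 + 18*z^18 + 8*z^19 + 3*z^20) + (- 39 - 120*z - 90*z^2 - 150*z^3 - 222*z^4 + 456*z^5 + 1146*z^6 + 1374*z^7 + 1680*z^8 + 1494*z^9 + 1221*z^10 + 1116*z^11 + 876*z^12 + 714*z^13 + 492*z^14 + 318*z^15 + 195*z^16 + 132*z^17 + 84*z^18 + 36*z^19 + 27*z^20)*U^1 + (- 144 - 348*z - 840*z^2 - 2994*z^3 - 4425*z^4 - 2892*z^5 - 2697*z^6 - 2772*z^7 - 2601*z^8 - 4734*z^9 - 4983*z^10 - 4278*z^11 - 3363*z^12 - 2112*z^13 - 1722*z^14 - 870*z^15 - 738*z^16 - 342*z^17 + 36*z^18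 - 54*z^19 + 81*z^20)*U^2 + (568 + 2176*z + 654*z^2 - 5512*z^3 - 6283*z^4 - 4380*z^5 - 6209*z^6 - 2882*z^7 - 6321*z^8 - 13598*z^9 - 10451*z^10 - 11334*z^11 - 7807*z^12 - 3016*z^13 - 4488*z^14 - 1736*z^15 - 2000*z^16 - 1650*z^17 - 108*z^18 - 432*z^19 + 81*z^20)*U^3 + (1872 + 7056*z + 6264*z^2 - 900*z^3 + 3825*z^4 + 7290*z^5 + 5382*z^6 + 17640*z^7 + 10503*z^8 - 882*z^9 + 9162*z^10 + 2538*z^11 + 5256*z^12 + 12006*z^13 + 2754*z^14 + 3762*z^15 + 1359*z^16 - 1242*z^17 + 405*z^18 - 486*z^19)*U^4 + (1296 + 5184*z + 5832*z^2 + 2592*z^3 + 7209*z^4 + 10692*z^5 + 10530*z^6 + 20736*z^7 + 17253*z^8 + 10044*z^9 + 18306*z^10 + 13122*z^11 + 12798*z^12 + 16686*z^13 + 7776*z^14 + 6156*z^15 + 3969*z^16 + 486*z^17 + 729*z^18)*U^5) + 27*(?w^5*((z+1)*p*rb z p))" .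
  have mini2: "\<And>L Q Y::'a. L = 27*Q + 27*Y \<Longrightarrow> L = 27*(Y + Q)" by (simp add: algebra_simps)
  show ?thesis by (rule mini2[OF fin])
qed



lemma sum_take_append: "sum_list (take k (xs @ ys)) = sum_list (take k xs) + sum_list (take (k - length xs) ys)"
  by (simp add: take_append)

lemma sum_take_Cons: "sum_list (take k (x # xs)) = (if k = 0 then 0 else x + sum_list (take (k - 1) xs))"
  by (cases k) auto

lemma mp_finite: "finite (motzkin_paths n)"
proof -
  have "motzkin_paths n \<subseteq> {xs. set xs \<subseteq> {-1,0,1} \<and> length xs = n}"
    by (auto simp: motzkin_paths_def)
  moreover have "finite {xs. set xs \<subseteq> {-1::int,0,1} \<and> length xs = n}"
    by (rule finite_lists_length_eq) simp
  ultimately show ?thesis by (rule finite_subset)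
qed

lemma mp0: "motzkin_paths 0 = {[]}"
  by (auto simp: motzkin_paths_def)

lemma mp1: "motzkin_paths 1 = {[0]}"
proof
  show "{[0]} \<subseteq> motzkin_paths 1"
    by (auto simp: motzkin_paths_def sum_take_Cons)
next
  show "motzkin_paths 1 \<subseteq> {[0]}"
  proof
    fix xs assume "xs \<in> motzkin_paths 1"
    then have "length xs = 1" "sum_list xs = 0" by (auto simp: motzkin_paths_def)
    then obtain x where "xs = [x]" by (cases xs) auto
    with \<open>sum_list xs = 0\<close> show "xs \<in> {[0]}" by simp
  qed
qed

lemma mp_Cons0: "(0 # xs \<in> motzkin_paths (Suc n)) \<longleftrightarrow> xs \<in> motzkin_paths n"
proof
  assume h: "0 # xs \<in> motzkin_paths (Suc n)"
  show "xs \<in> motzkin_paths n"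
    unfolding motzkin_paths_def
  proof (intro CollectI conjI allI impI)
    fix k assume "k \<le> n"
    with h have "sum_list (take (Suc k) (0 # xs)) \<ge> 0" by (auto simp: motzkin_paths_def)
    then show "sum_list (take k xs) \<ge> 0" by simp
  qed (use h in \<open>auto simp: motzkin_paths_def\<close>)
next
  assume h: "xs \<in> motzkin_paths n"
  show "0 # xs \<in> motzkin_paths (Suc n)"
    unfolding motzkin_paths_def
  proof (intro CollectI conjI allI impI)
    fix k assume "k \<le> Suc n"
    with h show "sum_list (take k (0 # xs)) \<ge> 0"
      by (cases k) (auto simp: motzkin_paths_def)
  qed (use h in \<open>auto simp: motzkin_paths_def\<close>)
qed

lemma mp_arch:
  assumes "xs \<in> motzkin_paths a" "ys \<in> motzkin_paths b"
  shows "1 # xs @ [-1] @ ys \<in> motzkin_paths (a + b + 2)"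
  unfolding motzkin_paths_def
proof (intro CollectI conjI allI impI)
  have lx: "length xs = a" and ly: "length ys = b" and sx: "sum_list xs = 0" and sy: "sum_list ys = 0"
    and px: "\<And>k. k \<le> a \<Longrightarrow> sum_list (take k xs) \<ge> 0"
    and py: "\<And>k. k \<le> b \<Longrightarrow> sum_list (take k ys) \<ge> 0"
    using assms by (auto simp: motzkin_paths_def)
  fix k assume k: "k \<le> a + b + 2"
  show "sum_list (take k (1 # xs @ [-1] @ ys)) \<ge> 0"
  proof (cases "k = 0")
    case False
    have "sum_list (take k (1 # xs @ [-1] @ ys)) = 1 + sum_list (take (k-1) xs) + sum_list (take (k - 1 - a) ([-1] @ ys))"
      using False by (simp add: sum_take_Cons sum_take_append lx)
    also have "\<dots> \<ge> 0"
    proof (cases "k - 1 \<le> a")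
      case True
      then have "k - 1 - a = 0" by simp
      then show ?thesis using px[OF True] by simp
    next
      case F: False
      then have "take (k-1) xs = xs" using lx by simp
      moreover have "sum_list (take (k - 1 - a) ([-1] @ ys)) = -1 + sum_list (take (k - 2 - a) ys)"
        using F by (simp add: sum_take_Cons)
      moreover have "k - 2 - a \<le> b" using k by simp
      ultimately show ?thesis using py[of "k - 2 - a"] sx by simp
    qed
    finally show ?thesis .
  qed simp
qed (use assms in \<open>auto simp: motzkin_paths_def\<close>)

lemma arch_pos:
  assumes "xs \<in> motzkin_paths a" "k \<le> a"
  shows "sum_list (take (Suc k) (1 # xs @ [-1] @ ys)) \<ge> 1"
proof -
  have "length xs = a" "sum_list (take k xs) \<ge> 0" using assms by (auto simp: motzkin_paths_def)
  then show ?thesis using assms(2) by (simp add: sum_take_append)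
qed

lemma arch_zero:
  assumes "xs \<in> motzkin_paths a"
  shows "sum_list (take (Suc (Suc a)) (1 # xs @ [-1] @ ys)) = 0"
proof -
  have "length xs = a" "sum_list xs = 0" using assms by (auto simp: motzkin_paths_def)
  then show ?thesis by (simp add: sum_take_append)
qed

lemma arch_unique:
  assumes "xs \<in> motzkin_paths a" "xs' \<in> motzkin_paths a'"
    and eq: "1 # xs @ [-1] @ ys = 1 # xs' @ [-1] @ ys'"
  shows "a = a'"
proof (rule ccontr)
  assume "a \<noteq> a'"
  then consider "a < a'" | "a' < a" by linarith
  then show False
  proof cases
    case 1
    have "sum_list (take (Suc (Suc a)) (1 # xs' @ [-1] @ ys')) \<ge> 1"
      using arch_pos[OF assms(2), of "Suc a"] 1 by simp
    moreover have "sum_list (take (Suc (Suc a)) (1 # xs' @ [-1] @ ys')) = 0"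
      using arch_zero[OF assms(1), of ys] by (simp only: eq)
    ultimately show False by simp
  next
    case 2
    have "sum_list (take (Suc (Suc a')) (1 # xs @ [-1] @ ys)) \<ge> 1"
      using arch_pos[OF assms(1), of "Suc a'"] 2 by simp
    moreover have "sum_list (take (Suc (Suc a')) (1 # xs @ [-1] @ ys)) = 0"
      using arch_zero[OF assms(2), of ys'] by (simp only: eq)
    ultimately show False by simp
  qed
qed

lemma mp_hd:
  assumes "zs \<in> motzkin_paths (Suc n)"
  obtains t where "zs = 0 # t" | t where "zs = 1 # t"
proof -
  from assms have "length zs = Suc n" "set zs \<subseteq> {-1,0,1}" "sum_list (take 1 zs) \<ge> 0"
    by (auto simp: motzkin_paths_def)
  then obtain x t where "zs = x # t" "x \<in> {-1,0,1}" "x \<ge> 0" by (cases zs) auto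
  then show ?thesis using that by auto
qed

lemma mp_decomp:
  assumes "1 # t \<in> motzkin_paths (Suc (Suc n))"
  shows "\<exists>k\<le>n. \<exists>xs\<in>motzkin_paths k. \<exists>ys\<in>motzkin_paths (n-k). t = xs @ [-1] @ ys"
proof -
  define q where "q i = sum_list (take i t)" for i
  have lt: "length t = Suc n" and st: "set t \<subseteq> {-1,0,1}" and tot: "sum_list t = -1"
    using assms by (auto simp: motzkin_paths_def)
  have pre: "q i \<ge> -1" if "i \<le> Suc n" for i
  proof -
    have "sum_list (take (Suc i) (1 # t)) \<ge> 0" using assms that by (auto simp: motzkin_paths_def)
    then show ?thesis by (simp add: q_def)
  qed
  have ex: "q (Suc n) = -1" using lt tot by (simp add: q_def)
  define j where "j = (LEAST i. q i = -1)"
  have qj: "q j = -1" unfolding j_def by (rule LeastI[of _ "Suc n"]) (rule ex)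
  have jle: "j \<le> Suc n" unfolding j_def by (rule Least_le) (rule ex)
  have jmin: "q i \<ge> 0" if "i < j" for i
  proof -
    have "q i \<noteq> -1" using not_less_Least[of i "\<lambda>i. q i = -1"] that unfolding j_def by blast
    moreover have "q i \<ge> -1" using pre[of i] that jle by simp
    ultimately show ?thesis by simp
  qed
  have j0: "j \<noteq> 0" using qj by (cases j) (auto simp: q_def)
  then obtain j' where j': "j = Suc j'" by (cases j) auto
  have jlt: "j' < length t" using jle j' lt by simp
  have qstep: "q j = q j' + t ! j'"
    unfolding q_def j' using jlt by (simp add: take_Suc_conv_app_nth)
  have tmem: "t ! j' \<in> {-1,0,1}" using nth_mem[OF jlt] st by blast
  have qj'0: "q j' \<ge> 0" using jmin[of j'] j' by simp
  from qstep qj tmem qj'0 have qj': "q j' = 0" and tj: "t ! j' = -1" by auto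
  define xs where "xs = take j' t"
  define ys where "ys = drop j t"
  have teq: "t = xs @ [-1] @ ys"
    using id_take_nth_drop[OF jlt] tj unfolding xs_def ys_def j' by simp
  have xs_mp: "xs \<in> motzkin_paths j'"
    unfolding motzkin_paths_def
  proof (intro CollectI conjI allI impI)
    show "length xs = j'" using jlt by (simp add: xs_def)
    show "set xs \<subseteq> {-1,0,1}" using st set_take_subset[of j' t] unfolding xs_def by blast
    show "sum_list xs = 0" using qj' by (simp add: xs_def q_def)
    fix k assume "k \<le> j'"
    then have "sum_list (take k xs) = q k" by (simp add: xs_def q_def min_def)
    then show "sum_list (take k xs) \<ge> 0" using jmin[of k] \<open>k \<le> j'\<close> j' by simp
  qed
  have ys_mp: "ys \<in> motzkin_paths (n - j')"
    unfolding motzkin_paths_def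
  proof (intro CollectI conjI allI impI)
    show "length ys = n - j'" using lt j' by (simp add: ys_def)
    show "set ys \<subseteq> {-1,0,1}" using st set_drop_subset[of j t] unfolding ys_def by blast
    have "sum_list t = q j + sum_list ys"
      unfolding q_def ys_def by (metis append_take_drop_id sum_list_append)
    then show "sum_list ys = 0" using tot qj by simp
    fix k assume k: "k \<le> n - j'"
    have "q (j + k) = q j + sum_list (take k ys)"
      unfolding q_def ys_def by (simp add: take_add)
    moreover have "q (j + k) \<ge> -1" using pre[of "j+k"] k j' jle by simp
    ultimately show "sum_list (take k ys) \<ge> 0" using qj by simp
  qed
  have "j' \<le> n" using jle j' by simp
  then show ?thesis using xs_mp ys_mp teq by blast
qed

lemma motzkin_rec:
  "motzkin (Suc (Suc n)) = motzkin (Suc n) + (\<Sum>k\<le>n. motzkin k * motzkin (n - k))"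
proof -
  define f where "f = (\<lambda>(k::nat, xs, ys). (1::int) # xs @ [-1] @ ys)"
  define S where "S = (SIGMA k:{..n}. motzkin_paths k \<times> motzkin_paths (n - k))"
  have seteq: "motzkin_paths (Suc (Suc n)) = (Cons 0) ` motzkin_paths (Suc n) \<union> f ` S"
  proof (intro equalityI subsetI)
    fix zs assume zs: "zs \<in> motzkin_paths (Suc (Suc n))"
    then show "zs \<in> (Cons 0) ` motzkin_paths (Suc n) \<union> f ` S"
    proof (cases rule: mp_hd)
      case (1 t)
      then show ?thesis using zs mp_Cons0 by blast
    next
      case (2 t)
      then obtain k xs ys where "k \<le> n" "xs \<in> motzkin_paths k" "ys \<in> motzkin_paths (n-k)"
        "t = xs @ [-1] @ ys" using mp_decomp zs by blast
      then have "zs = f (k, xs, ys)" "(k, xs, ys) \<in> S" using 2 by (auto simp: f_def S_def)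
      then show ?thesis by blast
    qed
  next
    fix zs assume "zs \<in> (Cons 0) ` motzkin_paths (Suc n) \<union> f ` S"
    then show "zs \<in> motzkin_paths (Suc (Suc n))"
    proof
      assume "zs \<in> (Cons 0) ` motzkin_paths (Suc n)"
      then show ?thesis using mp_Cons0 by blast
    next
      assume "zs \<in> f ` S"
      then obtain k xs ys where "k \<le> n" "xs \<in> motzkin_paths k" "ys \<in> motzkin_paths (n-k)"
        "zs = 1 # xs @ [-1] @ ys" by (auto simp: f_def S_def)
      then show ?thesis using mp_arch[of xs k ys "n-k"] by simp
    qed
  qed
  have fin: "finite S" unfolding S_def by (auto intro!: finite_SigmaI finite_cartesian_product mp_finite)
  have disj: "(Cons 0) ` motzkin_paths (Suc n) \<inter> f ` S = {}" unfolding f_def by auto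
  have inj: "inj_on f S"
  proof (rule inj_onI)
    fix u v assume u: "u \<in> S" and v: "v \<in> S" and e: "f u = f v"
    obtain k xs ys where U: "u = (k, xs, ys)" by (cases u) auto
    obtain k' xs' ys' where V: "v = (k', xs', ys')" by (cases v) auto
    have m: "xs \<in> motzkin_paths k" "xs' \<in> motzkin_paths k'" using u v U V by (auto simp: S_def)
    have e': "1 # xs @ [-1] @ ys = 1 # xs' @ [-1] @ ys'" using e U V by (simp add: f_def)
    have "k = k'" using arch_unique[OF m e'] .
    moreover have "length xs = k" "length xs' = k'" using m by (auto simp: motzkin_paths_def)
    ultimately have "xs = xs'" "ys = ys'" using e' by auto
    then show "u = v" using U V \<open>k = k'\<close> by simp
  qed
  have "motzkin (Suc (Suc n)) = card ((Cons 0) ` motzkin_paths (Suc n)) + card (f ` S)"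
    unfolding motzkin_def seteq
    by (rule card_Un_disjoint) (use mp_finite fin disj in auto)
  also have "card ((Cons 0) ` motzkin_paths (Suc n)) = motzkin (Suc n)"
    unfolding motzkin_def by (rule card_image) (simp add: inj_on_def)
  also have "card (f ` S) = card S" by (rule card_image[OF inj])
  also have "card S = (\<Sum>k\<le>n. motzkin k * motzkin (n - k))"
    unfolding S_def motzkin_def
    by (subst card_SigmaI) (auto simp: card_cartesian_product mp_finite)
  finally show ?thesis .
qed

lemma motzkin_0: "motzkin 0 = 1" by (simp add: motzkin_def mp0)
lemma motzkin_1: "motzkin (Suc 0) = 1" using mp1 unfolding motzkin_def by simp

definition mgf :: "int fps" where "mgf = Abs_fps (\<lambda>n. int (motzkin n))"

lemma mgf_eq: "fps_X^2 * mgf^2 + (fps_X - 1) * mgf + 1 = 0"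
proof (rule fps_ext)
  fix n
  have m2: "(mgf^2) $ k = (\<Sum>i=0..k. int (motzkin i) * int (motzkin (k - i)))" for k
    by (simp add: power2_eq_square fps_mult_nth mgf_def)
  have xm: "(fps_X * mgf) $ k = (if k = 0 then 0 else int (motzkin (k - 1)))" for k
    using fps_X_power_mult_nth[of 1 mgf k] by (simp add: mgf_def)
  have "(fps_X^2 * mgf^2 + (fps_X - 1) * mgf + 1) $ n
      = (if n < 2 then 0 else (mgf^2) $ (n-2)) + (if n = 0 then 0 else int (motzkin (n - 1)))
        - int (motzkin n) + (if n = 0 then 1 else 0)"
    by (simp add: fps_X_power_mult_nth algebra_simps xm mgf_def)
  also have "\<dots> = 0"
  proof (cases n)
    case 0 then show ?thesis by (simp add: motzkin_0)
  next
    case (Suc k)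
    show ?thesis
    proof (cases k)
      case 0 then show ?thesis using Suc by (simp add: motzkin_0 motzkin_1)
    next
      case (Suc j)
      have "int (motzkin (Suc (Suc j))) = int (motzkin (Suc j)) + (\<Sum>i=0..j. int (motzkin i) * int (motzkin (j - i)))"
        by (simp add: motzkin_rec atLeast0AtMost of_nat_sum)
      then show ?thesis using \<open>n = Suc k\<close> Suc m2[of j] by simp
    qed
  qed
  finally show "(fps_X^2 * mgf^2 + (fps_X - 1) * mgf + 1) $ n = 0 $ n" by simp
qed



definition Pk :: "nat \<Rightarrow> int fps" where "Pk k = (\<Prod>j<k. (1 + fps_X ^ (3 ^ j)))"

lemma Pk_Suc: "Pk (Suc k) = Pk k * (1 + fps_X ^ (3 ^ k))"
  by (simp add: Pk_def)

lemma Pk_rel: "\<exists>V. (1 + fps_X) * (Pk k)^2 = 1 + fps_X ^ (3 ^ k) + 3 * V"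
proof (induction k)
  case 0 then show ?case by (intro exI[of _ 0]) (simp add: Pk_def)
next
  case (Suc k)
  then obtain V where V: "(1 + fps_X) * (Pk k)^2 = 1 + fps_X ^ (3 ^ k) + 3 * V" by blast
  define t :: "int fps" where "t = fps_X ^ (3 ^ k)"
  have t3: "t^3 = fps_X ^ (3 ^ Suc k)" by (simp add: t_def power_mult[symmetric] mult.commute)
  have "(1 + fps_X) * (Pk (Suc k))^2 = ((1 + fps_X) * (Pk k)^2) * (1 + t)^2"
    by (simp add: Pk_Suc t_def power_mult_distrib)
  also have "\<dots> = (1 + t + 3 * V) * (1 + t)^2" using V by (simp add: t_def)
  also have "\<dots> = 1 + t^3 + 3 * (t + t^2 + V * (1 + t)^2)"
    by algebra
  finally have "(1 + fps_X) * (Pk (Suc k))^2 = 1 + fps_X ^ (3 ^ Suc k) + 3 * (t + t^2 + V * (1 + t)^2)"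
    using t3 by simp
  then show ?case by blast
qed

lemma Pk_stable1: "n < 3 ^ k \<Longrightarrow> Pk (Suc k) $ n = Pk k $ n"
  by (simp add: Pk_Suc algebra_simps fps_X_power_mult_right_nth)

lemma Pk_stable: assumes "n < 3 ^ k" "k \<le> k'" shows "Pk k' $ n = Pk k $ n"
  using assms(2)
proof (induction k' rule: dec_induct)
  case base then show ?case by simp
next
  case (step m)
  have "n < 3 ^ m" using assms(1) step(1)
    by (meson less_le_trans one_le_numeral power_increasing)
  then show ?case using step(3) Pk_stable1 by simp
qed

lemma lt_pow3: "n < (3::nat) ^ n"
proof (induction n)
  case (Suc n) then show ?case by simp
qed simp

lemma Psi_nth: "n < 3 ^ k \<Longrightarrow> Psi $ n = Pk k $ n"
proof -
  assume n: "n < 3 ^ k"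
  have a: "Psi $ n = Pk (Suc n) $ n" by (simp add: Psi_def Pk_def)
  have n1: "n < 3 ^ Suc n" using lt_pow3[of n] by simp
  have "Pk (max k (Suc n)) $ n = Pk (Suc n) $ n" by (rule Pk_stable[OF n1]) simp
  moreover have "Pk (max k (Suc n)) $ n = Pk k $ n" by (rule Pk_stable[OF n]) simp
  ultimately show ?thesis using a by simp
qed

lemma mult_nth_cong: "(\<And>j. j \<le> n \<Longrightarrow> f $ j = g $ j) \<Longrightarrow> (h * f) $ n = (h * g) $ n"
  by (simp add: fps_mult_nth)

lemma Psi_rel_nth: "3 dvd ((1 + fps_X) * Psi^2 - 1) $ n"
proof -
  define k where "k = Suc n"
  have nk: "n < 3 ^ k" using lt_pow3[of n] by (simp add: k_def)
  have eqj: "\<And>j. j \<le> n \<Longrightarrow> Psi $ j = Pk k $ j" using nk by (intro Psi_nth) simp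
  have "((1 + fps_X) * Psi * Psi) $ n = ((1 + fps_X) * Psi * Pk k) $ n"
    by (rule mult_nth_cong) (use eqj in auto)
  also have "\<dots> = ((1 + fps_X) * Pk k * Psi) $ n" by (simp add: ac_simps)
  also have "\<dots> = ((1 + fps_X) * Pk k * Pk k) $ n"
    by (rule mult_nth_cong) (use eqj in auto)
  finally have e: "((1 + fps_X) * Psi^2) $ n = ((1 + fps_X) * (Pk k)^2) $ n"
    by (simp add: power2_eq_square ac_simps)
  obtain V where V: "(1 + fps_X) * (Pk k)^2 = 1 + fps_X ^ (3 ^ k) + 3 * V" using Pk_rel by blast
  have "((1 + fps_X) * Psi^2 - 1) $ n = 3 * V $ n"
    using e V nk by (simp add: numeral_fps_const)
  then show ?thesis by simp
qed

lemma Phi_rel: "\<exists>U. (1 + fps_X^3) * (Psi oo fps_X^3)^2 = 1 + 3 * U"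
proof -
  define U0 where "U0 = Abs_fps (\<lambda>n. ((1 + fps_X) * Psi^2 - 1) $ n div 3)"
  have U0: "(1 + fps_X) * Psi^2 = 1 + 3 * U0"
  proof (rule fps_ext)
    fix n
    show "((1 + fps_X) * Psi^2) $ n = (1 + 3 * U0) $ n"
      using Psi_rel_nth[of n] by (simp add: U0_def numeral_fps_const algebra_simps)
  qed
  have c0: "(fps_X ^ 3 :: int fps) $ 0 = 0" by simp
  have "((1 + fps_X) * Psi^2) oo fps_X^3 = (1 + fps_X^3) * (Psi oo fps_X^3)^2"
    by (simp add: fps_compose_mult_distrib[OF c0] fps_compose_add_distrib fps_compose_power[OF c0])
  moreover have "(1 + 3 * U0) oo fps_X^3 = 1 + 3 * (U0 oo fps_X^3)"
    by (simp add: fps_compose_mult_distrib[OF c0] fps_compose_add_distrib)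
  ultimately show ?thesis using U0 by metis
qed

lemma Phi0: "(Psi oo fps_X^3) $ 0 = 1"
  by (simp add: Psi_def)



lemma dvd27_cancel:
  fixes c f :: "int fps"
  assumes s: "27 dvd (c$0 * s - 1)" and h: "\<And>n. 27 dvd (c*f)$n"
  shows "27 dvd f$n"
proof (induction n rule: less_induct)
  case (less n)
  have "(c*f)$n = c$0 * f$n + (\<Sum>i\<in>{1..n}. c$i * f$(n-i))"
    by (simp add: fps_mult_nth sum.atLeast_Suc_atMost)
  moreover have "27 dvd (\<Sum>i\<in>{1..n}. c$i * f$(n-i))"
    by (rule dvd_sum) (use less in auto)
  ultimately have "27 dvd c$0 * f$n" using h[of n] by (metis dvd_add_left_iff add.commute)
  then have "27 dvd s * (c$0 * f$n) - (c$0 * s - 1) * f$n" using s by auto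
  moreover have "s * (c$0 * f$n) - (c$0 * s - 1) * f$n = f$n" by (simp add: algebra_simps)
  ultimately show ?case by simp
qed

lemma fps_27_nth: "(27 * (K::int fps)) $ n = 27 * K $ n"
  by (simp add: numeral_fps_const)

definition Phi :: "int fps" where "Phi = Psi oo fps_X^3"

lemma F_div: "27 dvd ((rr fps_X Phi)^2 + (fps_X - 1)*(rr fps_X Phi) + fps_X^2) $ n"
proof -
  obtain U where U: "(1 + fps_X^3) * Phi^2 = 1 + 3 * U" using Phi_rel unfolding Phi_def by blast
  obtain K where K: "(1 + fps_X^3)^5 * ((rr fps_X Phi)^2 + (fps_X - 1)*(rr fps_X Phi) + fps_X^2) = 27 * K"
    using B_core[OF U] by blast
  show ?thesis
  proof (rule dvd27_cancel[where s = 1])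
    show "27 dvd (((1::int fps) + fps_X^3)^5) $ 0 * 1 - 1" by (simp add: fps_nth_power_0)
    fix m show "27 dvd ((1 + fps_X^3)^5 * ((rr fps_X Phi)^2 + (fps_X - 1)*(rr fps_X Phi) + fps_X^2)) $ m"
      unfolding K fps_27_nth by simp
  qed
qed

lemma Psi0: "Psi $ 0 = 1" by (simp add: Psi_def)

lemma r0: "(rr fps_X Phi) $ 0 = 27"
  by (simp add: rr_def rb_def fps_nth_power_0 Phi_def Psi0 numeral_fps_const)

lemma E_cong: "27 dvd (rr fps_X Phi - fps_X^2 * mgf) $ n"
proof -
  define r where "r = rr fps_X Phi"
  define s where "s = fps_X^2 * mgf"
  have G: "s^2 + (fps_X - 1)*s + fps_X^2 = 0"
  proof -
    have "s^2 + (fps_X - 1)*s + fps_X^2 = fps_X^2 * (fps_X^2 * mgf^2 + (fps_X - 1) * mgf + 1)"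
      unfolding s_def by algebra
    then show ?thesis using mgf_eq by simp
  qed
  have fac: "(r + s + fps_X - 1) * (r - s) = (r^2 + (fps_X - 1)*r + fps_X^2) - (s^2 + (fps_X - 1)*s + fps_X^2)"
    by algebra
  have c0: "(r + s + fps_X - 1) $ 0 = 26" using r0 by (simp add: r_def s_def)
  show ?thesis unfolding r_def[symmetric] s_def[symmetric]
  proof (rule dvd27_cancel[where s = "-1"])
    show "27 dvd (r + s + fps_X - 1) $ 0 * (-1) - 1" using c0 by simp
    fix m show "27 dvd ((r + s + fps_X - 1) * (r - s)) $ m"
      unfolding fac G using F_div[of m] by (simp add: r_def)
  qed
qed

lemma expr_eq:
  fixes z zi p :: "'a::idom"
  assumes h: "z * zi = 1"
  shows "13 * zi + 14 * zi^2
      + (9 * z + 12 + 24 * zi + 21 * zi^2) * p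
      + (9 * z^5 + 12 * z^4 + 10 * z^3 + 23 * z^2 + 25 * z + 19 + 14 * zi + 4 * zi^2) * p^3
      - (9 * z^7 + 3 * z^6 + 24 * z^5 + 30 * z^4 + 6 * z^3 + 21 * z^2 + 6 * z + 3
           + 24 * zi + 12 * zi^2) * p^5 = zi^2 * rr z p"
proof -
  let ?E0 = "(9*z+12)*p + (9*z^5+12*z^4+10*z^3+23*z^2+25*z+19)*p^3 - (9*z^7+3*z^6+24*z^5+30*z^4+6*z^3+21*z^2+6*z+3)*p^5"
  let ?E1 = "13 + 24*p + 14*p^3 - 24*p^5"
  let ?E2 = "14 + 21*p + 4*p^3 - 12*p^5"
  have i1: "13 * zi + 14 * zi^2
      + (9 * z + 12 + 24 * zi + 21 * zi^2) * p
      + (9 * z^5 + 12 * z^4 + 10 * z^3 + 23 * z^2 + 25 * z + 19 + 14 * zi + 4 * zi^2) * p^3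
      - (9 * z^7 + 3 * z^6 + 24 * z^5 + 30 * z^4 + 6 * z^3 + 21 * z^2 + 6 * z + 3
           + 24 * zi + 12 * zi^2) * p^5 = ?E0 + zi * ?E1 + zi^2 * ?E2"
    by algebra
  have i2: "rr z p = z^2 * ?E0 + z * ?E1 + ?E2"
    unfolding rr_def rb_def by algebra
  have i3: "\<And>E0 E1 E2::'a. zi^2 * (z^2 * E0 + z * E1 + E2) = (z*zi)^2 * E0 + (z*zi)*zi*E1 + zi^2*E2"
    by algebra
  show ?thesis unfolding i1 i2 i3 h by simp
qed

lemma rr_fls: "fps_to_fls (rr fps_X f) = rr fls_X (fps_to_fls f)"
  by (simp add: rr_def rb_def fls_times_fps_to_fls fps_to_fls_power)


theorem theorem7p2:
  fixes z zi :: "int fls"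
  defines "z \<equiv> fls_X" and "zi \<equiv> fls_X_inv"
  defines "P \<equiv> fps_to_fls (Psi oo (fps_X ^ 3))"
  shows "\<forall>n::int. [fls_nth (fps_to_fls (Abs_fps (\<lambda>n. int (motzkin n)))) n =
     fls_nth
     (13 * zi + 14 * zi^2
      + (9 * z + 12 + 24 * zi + 21 * zi^2) * P
      + (9 * z^5 + 12 * z^4 + 10 * z^3 + 23 * z^2 + 25 * z + 19 + 14 * zi + 4 * zi^2) * P^3
      - (9 * z^7 + 3 * z^6 + 24 * z^5 + 30 * z^4 + 6 * z^3 + 21 * z^2 + 6 * z + 3
           + 24 * zi + 12 * zi^2) * P^5) n] (mod 27)"
proof
  fix n :: int
  have zzi: "z * zi = 1" by (simp add: z_def zi_def fls_X_inv_times_conv_shift)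
  have PP: "P = fps_to_fls Phi" by (simp add: P_def Phi_def)
  have E: "13 * zi + 14 * zi^2
      + (9 * z + 12 + 24 * zi + 21 * zi^2) * P
      + (9 * z^5 + 12 * z^4 + 10 * z^3 + 23 * z^2 + 25 * z + 19 + 14 * zi + 4 * zi^2) * P^3
      - (9 * z^7 + 3 * z^6 + 24 * z^5 + 30 * z^4 + 6 * z^3 + 21 * z^2 + 6 * z + 3
           + 24 * zi + 12 * zi^2) * P^5 = zi^2 * rr z P"
    by (rule expr_eq[OF zzi])
  have R: "rr z P = fps_to_fls (rr fps_X Phi)" by (simp add: z_def PP rr_fls)
  have rhs: "fls_nth (zi^2 * rr z P) n = (if n + 2 < 0 then 0 else (rr fps_X Phi) $ nat (n+2))"
    unfolding R zi_def by (simp add: fls_X_inv_power_times_conv_shift)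
  have lhs: "fls_nth (fps_to_fls (Abs_fps (\<lambda>n. int (motzkin n)))) n = (if n < 0 then 0 else int (motzkin (nat n)))"
    by simp
  have cg: "27 dvd (rr fps_X Phi) $ k - (if k < 2 then 0 else int (motzkin (k - 2)))" for k
    using E_cong[of k] by (cases "k < 2") (simp_all add: fps_X_power_mult_nth mgf_def)
  show "[fls_nth (fps_to_fls (Abs_fps (\<lambda>n. int (motzkin n)))) n =
     fls_nth
     (13 * zi + 14 * zi^2
      + (9 * z + 12 + 24 * zi + 21 * zi^2) * P
      + (9 * z^5 + 12 * z^4 + 10 * z^3 + 23 * z^2 + 25 * z + 19 + 14 * zi + 4 * zi^2) * P^3
      - (9 * z^7 + 3 * z^6 + 24 * z^5 + 30 * z^4 + 6 * z^3 + 21 * z^2 + 6 * z + 3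
           + 24 * zi + 12 * zi^2) * P^5) n] (mod 27)"
    unfolding E rhs lhs cong_iff_dvd_diff
  proof -
    consider "n + 2 < 0" | "n < 0" "n + 2 \<ge> 0" | "n \<ge> 0" by linarith
    then show "27 dvd (if n < 0 then 0 else int (motzkin (nat n))) - (if n + 2 < 0 then 0 else (rr fps_X Phi) $ nat (n+2))"
    proof cases
      case 1 then show ?thesis by simp
    next
      case 2
      have "nat (n+2) < 2" using 2 by simp
      then show ?thesis using 2 cg[of "nat (n+2)"] by simp
    next
      case 3
      have "nat (n+2) = nat n + 2" using 3 by simp
      then have "27 dvd (rr fps_X Phi) $ nat (n+2) - int (motzkin (nat n))" using cg[of "nat (n+2)"] by simp
      then show ?thesis using 3 by (simp add: dvd_diff_commute)
    qed
  qed
qed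

end
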